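(* Let $\mathfrak g$ be of type $A_n$. For $s\ge1$, $$\mathbf A_s=\bigl\{\{\alpha_{i_k,j_k}\}_{1\le k\le s}:\ i_k,j_k\in I,\ i_1<i_2<\dots<i_s\le j_1<j_2<\dots<j_s\bigr\}.$$ In particular $\#\mathbf A_s=\binom{n}{2s}+\binom{n}{2s-1}$ for $s\ge1$, and $\sum_{s\ge0}\#\mathbf A_s=2^n$.
   Context: Simple roots $\alpha_1,\dots,\alpha_n$ of $A_n$ numbered as in Bourbaki, $I=\{1,\dots,n\}$; for $i\le j$, $\alpha_{i,j}=\alpha_i+\alpha_{i+1}+\dots+\alpha_j$, so $R^+=\{\alpha_{i,j}:i\le j\}$ and $\theta=\alpha_{1,n}$. Partial order: $\lambda\le\mu$ iff $\mu-\lambda$ is a $\mathbb Z_{\ge0}$-combination of simple roots. An antichain is a subset of $R^+$ of pairwise incomparable elements; $\Phi(A)=\{\alpha\in R^+:\alpha\ge\beta$ for some $\beta\in A\}$; $A$ is abelian if $\beta_1+\beta_2\notin R$ for all $\beta_1,\beta_2\in\Phi(A)$. $\mathbf A_s$ is the set of abelian antichains with $s$ elements, and $\mathbf A_0$ consists of the empty antichain only. Convention: $\binom{m}{k}=0$ if $k>m$. *)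

theory Defs
  imports Main "HOL-Library.Function_Algebras"
begin

text \<open>Elements of the root lattice are represented by their
coordinates with respect to the simple roots alpha_1, ..., alpha_n, i.e. as functions
nat => int (coordinate k = coefficient of alpha_k; coordinates outside I are 0).\<close>

definition simple_root :: "nat \<Rightarrow> nat \<Rightarrow> int" where
  "simple_root i = (\<lambda>k. if k = i then 1 else 0)"

definition alpha :: "nat \<Rightarrow> nat \<Rightarrow> nat \<Rightarrow> int" where
  "alpha i j = (\<lambda>k. \<Sum>l\<in>{i..j}. simple_root l k)"

definition posroots :: "nat \<Rightarrow> (nat \<Rightarrow> int) set" where
  "posroots n = {alpha i j | i j. 1 \<le> i \<and> i \<le> j \<and> j \<le> n}"

definition roots :: "nat \<Rightarrow> (nat \<Rightarrow> int) set" where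
  "roots n = posroots n \<union> uminus ` posroots n"

definition rle :: "nat \<Rightarrow> (nat \<Rightarrow> int) \<Rightarrow> (nat \<Rightarrow> int) \<Rightarrow> bool" where
  "rle n lam mu \<longleftrightarrow> (\<exists>c :: nat \<Rightarrow> nat. mu - lam = (\<lambda>k. \<Sum>i\<in>{1..n}. int (c i) * simple_root i k))"

definition antichain :: "nat \<Rightarrow> (nat \<Rightarrow> int) set \<Rightarrow> bool" where
  "antichain n A \<longleftrightarrow> A \<subseteq> posroots n \<and>
     (\<forall>a\<in>A. \<forall>b\<in>A. a \<noteq> b \<longrightarrow> \<not> rle n a b \<and> \<not> rle n b a)"

definition Phi :: "nat \<Rightarrow> (nat \<Rightarrow> int) set \<Rightarrow> (nat \<Rightarrow> int) set" where
  "Phi n A = {a \<in> posroots n. \<exists>b\<in>A. rle n b a}"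

definition abelian :: "nat \<Rightarrow> (nat \<Rightarrow> int) set \<Rightarrow> bool" where
  "abelian n A \<longleftrightarrow> (\<forall>b1\<in>Phi n A. \<forall>b2\<in>Phi n A. b1 + b2 \<notin> roots n)"

definition abelian_antichains :: "nat \<Rightarrow> nat \<Rightarrow> (nat \<Rightarrow> int) set set" where
  "abelian_antichains n s = {A. antichain n A \<and> abelian n A \<and> card A = s}"

end

theory Submission
  imports Defs
begin

lemma alpha_val: "alpha i j k = (if i \<le> k \<and> k \<le> j then 1 else 0)"
  by (simp add: alpha_def simple_root_def)

lemma alpha_inj:
  assumes "i \<le> j" "i' \<le> j'" "alpha i j = alpha i' j'"
  shows "i = i' \<and> j = j'"
proof -
  have "\<And>k. alpha i j k = alpha i' j' k" using assms(3) by simp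
  from this[of i] this[of i'] this[of j] this[of j'] assms(1,2)
  show ?thesis by (simp add: alpha_val split: if_splits)
qed

lemma rle_iff:
  "rle n lam mu \<longleftrightarrow> (\<forall>k. lam k \<le> mu k) \<and> (\<forall>k. k \<notin> {1..n} \<longrightarrow> lam k = mu k)"
proof
  assume "rle n lam mu"
  then obtain c where c: "mu - lam = (\<lambda>k. \<Sum>i\<in>{1..n}. int (c i) * simple_root i k)"
    unfolding rle_def by blast
  have e: "\<And>k. mu k - lam k = (if k \<in> {1..n} then int (c k) else 0)"
  proof -
    fix k
    have "mu k - lam k = (\<Sum>i\<in>{1..n}. int (c i) * simple_root i k)"
      using fun_cong[OF c, of k] by simp
    also have "\<dots> = (if k \<in> {1..n} then int (c k) else 0)"
      by (simp add: simple_root_def if_distrib cong: if_cong)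
    finally show "mu k - lam k = (if k \<in> {1..n} then int (c k) else 0)" .
  qed
  show "(\<forall>k. lam k \<le> mu k) \<and> (\<forall>k. k \<notin> {1..n} \<longrightarrow> lam k = mu k)"
  proof (intro conjI allI impI)
    fix k show "lam k \<le> mu k" using e[of k] by (auto split: if_splits)
  next
    fix k assume "k \<notin> {1..n}" then show "lam k = mu k" using e[of k] by auto
  qed
next
  assume h: "(\<forall>k. lam k \<le> mu k) \<and> (\<forall>k. k \<notin> {1..n} \<longrightarrow> lam k = mu k)"
  define c where "c = (\<lambda>k. nat (mu k - lam k))"
  have "mu - lam = (\<lambda>k. \<Sum>i\<in>{1..n}. int (c i) * simple_root i k)"
  proof
    fix k
    have "(\<Sum>i\<in>{1..n}. int (c i) * simple_root i k) = (if k \<in> {1..n} then int (c k) else 0)"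
      by (simp add: simple_root_def if_distrib cong: if_cong)
    then show "(mu - lam) k = (\<Sum>i\<in>{1..n}. int (c i) * simple_root i k)"
      using h by (auto simp: c_def)
  qed
  then show "rle n lam mu" unfolding rle_def by blast
qed

lemma rle_alpha:
  assumes "1 \<le> i" "i \<le> j" "j \<le> n" "1 \<le> p" "p \<le> q" "q \<le> n"
  shows "rle n (alpha i j) (alpha p q) \<longleftrightarrow> p \<le> i \<and> j \<le> q"
proof
  assume "rle n (alpha i j) (alpha p q)"
  then have "\<And>k. alpha i j k \<le> alpha p q k" by (simp add: rle_iff)
  from this[of i] this[of j] assms show "p \<le> i \<and> j \<le> q" by (auto simp: alpha_val split: if_splits)
next
  assume "p \<le> i \<and> j \<le> q"
  then show "rle n (alpha i j) (alpha p q)" using assms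
    by (auto simp: rle_iff alpha_val)
qed

lemma posroots_iff: "a \<in> posroots n \<longleftrightarrow> (\<exists>i j. 1 \<le> i \<and> i \<le> j \<and> j \<le> n \<and> a = alpha i j)"
  by (auto simp: posroots_def)

lemma finite_posroots: "finite (posroots n)"
proof -
  have "posroots n \<subseteq> (\<lambda>(i,j). alpha i j) ` ({1..n} \<times> {1..n})"
    by (auto simp: posroots_def)
  then show ?thesis by (rule finite_subset) auto
qed

lemma root_val: "r \<in> roots n \<Longrightarrow> r k \<le> 1"
  by (auto simp: roots_def posroots_def alpha_val)


lemma mono_steps:
  fixes f :: "nat \<Rightarrow> nat"
  assumes "\<forall>k\<in>{1..<s}. f k < f (Suc k)" "1 \<le> a" "a < b" "b \<le> s"
  shows "f a < f b"
  using assms(3,4)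
proof (induction b)
  case 0 then show ?case by simp
next
  case (Suc b)
  show ?case
  proof (cases "a = b")
    case True then show ?thesis using assms(1,2) Suc.prems by auto
  next
    case False
    then have "f a < f b" using Suc by auto
    moreover have "f b < f (Suc b)" using assms(1,2) Suc.prems False by auto
    ultimately show ?thesis by simp
  qed
qed

definition Tset :: "nat \<Rightarrow> nat \<Rightarrow> (nat \<Rightarrow> int) set set" where
  "Tset n s = {{alpha (i k) (j k) | k. k \<in> {1..s}} | i j.
                 (\<forall>k\<in>{1..s}. 1 \<le> i k \<and> j k \<le> n) \<and>
                 (\<forall>k\<in>{1..<s}. i k < i (Suc k) \<and> j k < j (Suc k)) \<and>
                 i s \<le> j 1}"

lemma T_sub_AA:
  assumes s: "s \<ge> 1" and b: "\<forall>k\<in>{1..s}. 1 \<le> i k \<and> j k \<le> n"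
    and m: "\<forall>k\<in>{1..<s}. i k < i (Suc k) \<and> j k < j (Suc k)" and c: "i s \<le> j 1"
  shows "{alpha (i k) (j k) | k. k \<in> {1..s}} \<in> abelian_antichains n s"
proof -
  let ?S = "{alpha (i k) (j k) | k. k \<in> {1..s}}"
  have mi: "\<And>a b. 1 \<le> a \<Longrightarrow> a < b \<Longrightarrow> b \<le> s \<Longrightarrow> i a < i b"
    using mono_steps[of s i] m by auto
  have mj: "\<And>a b. 1 \<le> a \<Longrightarrow> a < b \<Longrightarrow> b \<le> s \<Longrightarrow> j a < j b"
    using mono_steps[of s j] m by auto
  have is_le: "\<And>k. k \<in> {1..s} \<Longrightarrow> i k \<le> i s"
    using mi by (metis atLeastAtMost_iff le_eq_less_or_eq)
  have j1_le: "\<And>k. k \<in> {1..s} \<Longrightarrow> j 1 \<le> j k"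
    using mj by (metis atLeastAtMost_iff le_eq_less_or_eq)
  have ij: "\<And>k. k \<in> {1..s} \<Longrightarrow> i k \<le> i s \<and> i s \<le> j k"
    using is_le j1_le c by (meson le_trans)
  have eqS: "?S = (\<lambda>k. alpha (i k) (j k)) ` {1..s}" by blast
  have inj: "inj_on (\<lambda>k. alpha (i k) (j k)) {1..s}"
  proof (rule inj_onI)
    fix a b assume ab: "a \<in> {1..s}" "b \<in> {1..s}" "alpha (i a) (j a) = alpha (i b) (j b)"
    have "i a \<le> j a" "i b \<le> j b" using ij ab(1,2) by (meson le_trans)+
    then have "i a = i b" using alpha_inj ab(3) by blast
    then show "a = b" using mi ab(1,2)
      by (metis atLeastAtMost_iff less_irrefl nat_neq_iff)
  qed
  have card: "card ?S = s" using eqS inj card_image by fastforce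
  have sub: "?S \<subseteq> posroots n"
  proof
    fix x assume "x \<in> ?S"
    then obtain a where a: "a \<in> {1..s}" "x = alpha (i a) (j a)" by blast
    have "1 \<le> i a" "i a \<le> j a" "j a \<le> n" using b ij[OF a(1)] a(1) by auto
    then show "x \<in> posroots n" using a(2) by (auto simp: posroots_iff)
  qed
  have anti: "antichain n ?S"
    unfolding antichain_def
  proof (rule conjI[OF sub], intro ballI impI)
    fix x y assume x: "x \<in> ?S" and y: "y \<in> ?S" and ne: "x \<noteq> y"
    from x obtain a where a: "a \<in> {1..s}" "x = alpha (i a) (j a)" by blast
    from y obtain a' where a': "a' \<in> {1..s}" "y = alpha (i a') (j a')" by blast
    have aa: "a \<noteq> a'" using ne a a' by blast
    have bnd: "1 \<le> i a" "i a \<le> j a" "j a \<le> n" "1 \<le> i a'" "i a' \<le> j a'" "j a' \<le> n"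
      using b ij[OF a(1)] ij[OF a'(1)] a(1) a'(1) by auto
    have "(i a < i a' \<and> j a < j a') \<or> (i a' < i a \<and> j a' < j a)"
      using mi mj a a' aa by (metis atLeastAtMost_iff nat_neq_iff)
    then show "\<not> rle n x y \<and> \<not> rle n y x"
      using rle_alpha[OF bnd(1-6)] rle_alpha[OF bnd(4-6) bnd(1-3)] a a' by auto
  qed
  have ab: "abelian n ?S"
    unfolding abelian_def
  proof (intro ballI)
    have one: "\<And>x. x \<in> Phi n ?S \<Longrightarrow> x (i s) = 1"
    proof -
      fix x assume "x \<in> Phi n ?S"
      then obtain y where x: "x \<in> posroots n" and y: "y \<in> ?S" and r: "rle n y x"
        unfolding Phi_def by blast
      from y obtain a where a: "a \<in> {1..s}" "y = alpha (i a) (j a)" by blast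
      from x obtain p q where pq: "1 \<le> p" "p \<le> q" "q \<le> n" "x = alpha p q"
        by (auto simp: posroots_iff)
      have bnd: "1 \<le> i a" "i a \<le> j a" "j a \<le> n"
        using b ij[OF a(1)] a(1) by auto
      have "p \<le> i a \<and> j a \<le> q" using rle_alpha[OF bnd pq(1-3)] r a pq by simp
      then show "x (i s) = 1" using pq ij[OF a(1)] by (simp add: alpha_val)
    qed
    fix x y assume "x \<in> Phi n ?S" "y \<in> Phi n ?S"
    then have "x (i s) = 1" "y (i s) = 1" using one by blast+
    then have "(x + y) (i s) = 2" by simp
    then show "x + y \<notin> roots n" using root_val[of "x+y" n "i s"] by auto
  qed
  show ?thesis unfolding abelian_antichains_def using anti ab card by blast
qed


lemma AA_sub_T:
  assumes s: "s \<ge> 1" and A: "A \<in> abelian_antichains n s"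
  shows "\<exists>i j. A = {alpha (i k) (j k) | k. k \<in> {1..s}} \<and>
                 (\<forall>k\<in>{1..s}. 1 \<le> i k \<and> j k \<le> n) \<and>
                 (\<forall>k\<in>{1..<s}. i k < i (Suc k) \<and> j k < j (Suc k)) \<and>
                 i s \<le> j 1"
proof -
  have anti: "antichain n A" and ab: "abelian n A" and cA: "card A = s"
    using A by (auto simp: abelian_antichains_def)
  have Asub: "A \<subseteq> posroots n" using anti by (simp add: antichain_def)
  have inc: "\<And>x y. x \<in> A \<Longrightarrow> y \<in> A \<Longrightarrow> x \<noteq> y \<Longrightarrow> \<not> rle n x y"
    using anti by (auto simp: antichain_def)
  define Q where "Q = (\<lambda>p q. alpha p q \<in> A \<and> 1 \<le> p \<and> p \<le> q \<and> q \<le> n)"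
  define P where "P = {p. \<exists>q. Q p q}"
  define qf where "qf = (\<lambda>p. SOME q. Q p q)"
  have Qq: "\<And>p. p \<in> P \<Longrightarrow> Q p (qf p)"
    unfolding P_def qf_def by (auto intro: someI_ex)
  have Quniq: "\<And>p q. Q p q \<Longrightarrow> q = qf p"
  proof -
    fix p q assume h: "Q p q"
    then have pP: "p \<in> P" by (auto simp: P_def)
    note h2 = Qq[OF pP]
    show "q = qf p"
    proof (rule ccontr)
      assume ne: "q \<noteq> qf p"
      then have ne2: "alpha p q \<noteq> alpha p (qf p)" using alpha_inj h h2 by (auto simp: Q_def)
      have b1: "1 \<le> p" "p \<le> q" "q \<le> n" and b2: "1 \<le> p" "p \<le> qf p" "qf p \<le> n"
        using h h2 by (auto simp: Q_def)
      have "q \<le> qf p \<or> qf p \<le> q" by linarith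
      then have "rle n (alpha p q) (alpha p (qf p)) \<or> rle n (alpha p (qf p)) (alpha p q)"
        using rle_alpha[OF b1 b2] rle_alpha[OF b2 b1] by auto
      then show False using inc h h2 ne2 by (auto simp: Q_def)
    qed
  qed
  have Aeq: "A = (\<lambda>p. alpha p (qf p)) ` P"
  proof
    show "A \<subseteq> (\<lambda>p. alpha p (qf p)) ` P"
    proof
      fix a assume a: "a \<in> A"
      then obtain p q where pq: "1 \<le> p" "p \<le> q" "q \<le> n" "a = alpha p q"
        using Asub a posroots_iff by blast
      then have "Q p q" using a by (simp add: Q_def)
      then show "a \<in> (\<lambda>p. alpha p (qf p)) ` P" using Quniq pq by (auto simp: P_def)
    qed
  next
    show "(\<lambda>p. alpha p (qf p)) ` P \<subseteq> A" using Qq by (auto simp: Q_def)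
  qed
  have injP: "inj_on (\<lambda>p. alpha p (qf p)) P"
  proof (rule inj_onI)
    fix p p' assume "p \<in> P" "p' \<in> P" "alpha p (qf p) = alpha p' (qf p')"
    moreover have "p \<le> qf p" "p' \<le> qf p'" using Qq \<open>p \<in> P\<close> \<open>p' \<in> P\<close> by (auto simp: Q_def)
    ultimately show "p = p'" using alpha_inj by blast
  qed
  have finA: "finite A" using cA s by (metis card.infinite not_one_le_zero)
  have finP: "finite P" using finA Aeq injP finite_imageD by metis
  have cP: "card P = s" using cA Aeq injP card_image by metis
  define L where "L = sorted_list_of_set P"
  have sL: "sorted_wrt (<) L" and lenL: "length L = s" and setL: "set L = P"
    using finP cP by (auto simp: L_def)
  define i where "i = (\<lambda>k. L ! (k - 1))"
  define j where "j = (\<lambda>k. qf (i k))"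
  have iP: "\<And>k. k \<in> {1..s} \<Longrightarrow> i k \<in> P"
    using setL lenL by (auto simp: i_def)
  have imgI: "i ` {1..s} = P"
  proof
    show "i ` {1..s} \<subseteq> P" using iP by blast
    show "P \<subseteq> i ` {1..s}"
    proof
      fix p assume "p \<in> P"
      then obtain t where t: "t < s" "L ! t = p" using setL lenL by (metis in_set_conv_nth)
      then have "i (Suc t) = p" "Suc t \<in> {1..s}" by (auto simp: i_def)
      then show "p \<in> i ` {1..s}" by (metis image_eqI)
    qed
  qed
  have Aeq2: "A = {alpha (i k) (j k) | k. k \<in> {1..s}}"
  proof -
    have "A = (\<lambda>p. alpha p (qf p)) ` (i ` {1..s})" using Aeq imgI by simp
    also have "\<dots> = (\<lambda>k. alpha (i k) (j k)) ` {1..s}" by (simp add: image_image j_def)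
    finally show ?thesis by blast
  qed
  have bnd: "\<forall>k\<in>{1..s}. 1 \<le> i k \<and> j k \<le> n"
    using iP Qq by (auto simp: Q_def j_def)
  have ims: "\<forall>k\<in>{1..<s}. i k < i (Suc k)"
  proof
    fix k assume "k \<in> {1..<s}"
    then show "i k < i (Suc k)" using sorted_wrt_nth_less[OF sL, of "k - 1" k] lenL
      by (auto simp: i_def)
  qed
  have jms: "\<forall>k\<in>{1..<s}. j k < j (Suc k)"
  proof
    fix k assume k: "k \<in> {1..<s}"
    then have k1: "k \<in> {1..s}" and k2: "Suc k \<in> {1..s}" by auto
    have lt: "i k < i (Suc k)" using ims k by blast
    have Q1: "Q (i k) (j k)" and Q2: "Q (i (Suc k)) (j (Suc k))"
      using Qq iP k1 k2 by (auto simp: j_def)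
    show "j k < j (Suc k)"
    proof (rule ccontr)
      assume "\<not> j k < j (Suc k)"
      have b1: "1 \<le> i k" "i k \<le> j k" "j k \<le> n" and b2: "1 \<le> i (Suc k)" "i (Suc k) \<le> j (Suc k)" "j (Suc k) \<le> n"
        using Q1 Q2 by (auto simp: Q_def)
      then have "rle n (alpha (i (Suc k)) (j (Suc k))) (alpha (i k) (j k))"
        using rle_alpha[OF b2 b1] lt \<open>\<not> j k < j (Suc k)\<close> by simp
      moreover have "alpha (i (Suc k)) (j (Suc k)) \<noteq> alpha (i k) (j k)"
        using alpha_inj[OF b2(2) b1(2)] lt by auto
      ultimately show False using inc[of "alpha (i (Suc k)) (j (Suc k))" "alpha (i k) (j k)"] Q1 Q2 by (simp add: Q_def)
    qed
  qed
  have last: "i s \<le> j 1"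
  proof (rule ccontr)
    assume "\<not> i s \<le> j 1"
    then have lt: "j 1 < i s" by simp
    have s1: "1 \<in> {1..s}" "s \<in> {1..s}" using s by auto
    have Q1: "Q (i 1) (j 1)" and Qs: "Q (i s) (j s)"
      using Qq iP s1 by (auto simp: j_def)
    let ?a = "alpha (i 1) (j 1)" and ?b = "alpha (Suc (j 1)) n"
    have aA: "?a \<in> A" using Q1 by (simp add: Q_def)
    have aPhi: "?a \<in> Phi n A" using aA Asub by (auto simp: Phi_def rle_iff)
    have "1 \<le> Suc (j 1)" "Suc (j 1) \<le> n" using Qs lt by (auto simp: Q_def)
    then have bpos: "?b \<in> posroots n" unfolding posroots_iff by blast
    have "rle n (alpha (i s) (j s)) ?b"
      using rle_alpha[of "i s" "j s" n "Suc (j 1)" n] Qs lt by (auto simp: Q_def)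
    then have bPhi: "?b \<in> Phi n A" using bpos Qs by (auto simp: Phi_def Q_def)
    have "?a + ?b = alpha (i 1) n"
      using Q1 by (auto simp: alpha_val Q_def)
    moreover have "alpha (i 1) n \<in> roots n"
    proof -
      have "1 \<le> i 1" "i 1 \<le> n" using Q1 by (auto simp: Q_def)
      then have "alpha (i 1) n \<in> posroots n" unfolding posroots_iff by blast
      then show ?thesis by (simp add: roots_def)
    qed
    ultimately have "?a + ?b \<in> roots n" by simp
    with ab aPhi bPhi show False unfolding abelian_def by blast
  qed
  show ?thesis using Aeq2 bnd ims jms last by blast
qed


definition Lst :: "nat \<Rightarrow> nat \<Rightarrow> nat list set" where
  "Lst n m = {x. sorted_wrt (<) x \<and> set x \<subseteq> {1..n} \<and> length x = m}"

lemma card_Lst: "card (Lst n m) = n choose m \<and> finite (Lst n m)"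
proof -
  have inj: "inj_on set (Lst n m)"
  proof (rule inj_onI)
    fix x y assume "x \<in> Lst n m" "y \<in> Lst n m" "set x = set y"
    then show "x = y" by (auto simp: Lst_def strict_sorted_equal)
  qed
  have img: "set ` Lst n m = {B. B \<subseteq> {1..n} \<and> card B = m}"
  proof
    show "set ` Lst n m \<subseteq> {B. B \<subseteq> {1..n} \<and> card B = m}"
      by (auto simp: Lst_def strict_sorted_iff distinct_card)
    show "{B. B \<subseteq> {1..n} \<and> card B = m} \<subseteq> set ` Lst n m"
    proof
      fix B assume B: "B \<in> {B. B \<subseteq> {1..n} \<and> card B = m}"
      then have fB: "finite B" using finite_subset by blast
      have "sorted_list_of_set B \<in> Lst n m" using B fB by (auto simp: Lst_def)
      moreover have "set (sorted_list_of_set B) = B" using fB by simp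
      ultimately show "B \<in> set ` Lst n m" by (metis image_eqI)
    qed
  qed
  have "card (Lst n m) = card {B. B \<subseteq> {1..n} \<and> card B = m}"
    using card_image[OF inj] img by simp
  also have "\<dots> = n choose m" using n_subsets[of "{1..n}" m] by simp
  finally have c: "card (Lst n m) = n choose m" .
  have "finite (set ` Lst n m)" using img by simp
  then have "finite (Lst n m)" using finite_imageD inj by blast
  with c show ?thesis by simp
qed

definition Ant :: "nat \<Rightarrow> nat list \<Rightarrow> (nat \<Rightarrow> int) set" where
  "Ant s x = {alpha (x ! (k - 1)) (x ! (length x - s + k - 1)) | k. k \<in> {1..s}}"

definition Ls :: "nat \<Rightarrow> nat \<Rightarrow> nat list set" where
  "Ls n s = Lst n (2*s) \<union> Lst n (2*s - 1)"

lemma Ant_in_T: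
  assumes s: "s \<ge> 1" and x: "x \<in> Ls n s"
  shows "Ant s x \<in> Tset n s"
proof -
  let ?m = "length x"
  have sx: "sorted_wrt (<) x" and setx: "set x \<subseteq> {1..n}" and m: "?m = 2*s \<or> ?m = 2*s - 1"
    using x by (auto simp: Ls_def Lst_def)
  define i where "i = (\<lambda>k. x ! (k - 1))"
  define j where "j = (\<lambda>k. x ! (?m - s + k - 1))"
  have mem: "\<And>t. t < ?m \<Longrightarrow> x ! t \<in> {1..n}" using setx nth_mem by blast
  have lt: "\<And>a b. a < b \<Longrightarrow> b < ?m \<Longrightarrow> x ! a < x ! b" using sorted_wrt_nth_less[OF sx] by blast
  have bnd: "\<forall>k\<in>{1..s}. 1 \<le> i k \<and> j k \<le> n"
  proof
    fix k assume k: "k \<in> {1..s}"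
    then have "k - 1 < ?m" "?m - s + k - 1 < ?m" using m s by auto
    then show "1 \<le> i k \<and> j k \<le> n" using mem by (auto simp: i_def j_def)
  qed
  have mono: "\<forall>k\<in>{1..<s}. i k < i (Suc k) \<and> j k < j (Suc k)"
  proof
    fix k assume k: "k \<in> {1..<s}"
    then have "k - 1 < k" "k < ?m" "?m - s + k - 1 < ?m - s + Suc k - 1" "?m - s + Suc k - 1 < ?m"
      using m s by auto
    then show "i k < i (Suc k) \<and> j k < j (Suc k)" using lt by (auto simp: i_def j_def)
  qed
  have last: "i s \<le> j 1"
  proof -
    have "s - 1 \<le> ?m - s + 1 - 1" "?m - s + 1 - 1 < ?m" using m s by auto
    then show ?thesis using lt unfolding i_def j_def
      by (metis le_eq_less_or_eq order_refl)
  qed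
  have "Ant s x = {alpha (i k) (j k) | k. k \<in> {1..s}}" by (simp add: Ant_def i_def j_def)
  then show ?thesis unfolding Tset_def using bnd mono last by blast
qed


lemma map_upt_nth: "t < b - a \<Longrightarrow> map f [a..<b] ! t = f (a + t)"
  by simp

lemma sorted_map_upt:
  fixes f :: "nat \<Rightarrow> nat"
  assumes "\<And>a b. lo \<le> a \<Longrightarrow> a < b \<Longrightarrow> b < hi \<Longrightarrow> f a < f b"
  shows "sorted_wrt (<) (map f [lo..<hi])"
  unfolding sorted_wrt_map
  by (rule sorted_wrt_mono_rel[OF _ sorted_wrt_upt]) (use assms in auto)

lemma T_in_Ant:
  assumes s: "s \<ge> 1" and b: "\<forall>k\<in>{1..s}. 1 \<le> i k \<and> j k \<le> n"
    and m: "\<forall>k\<in>{1..<s}. i k < i (Suc k) \<and> j k < j (Suc k)" and c: "i s \<le> j 1"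
  shows "\<exists>x\<in>Ls n s. {alpha (i k) (j k) | k. k \<in> {1..s}} = Ant s x"
proof -
  have mi: "\<And>a b. 1 \<le> a \<Longrightarrow> a < b \<Longrightarrow> b \<le> s \<Longrightarrow> i a < i b"
    using mono_steps[of s i] m by auto
  have mj: "\<And>a b. 1 \<le> a \<Longrightarrow> a < b \<Longrightarrow> b \<le> s \<Longrightarrow> j a < j b"
    using mono_steps[of s j] m by auto
  have is_le: "\<And>k. k \<in> {1..s} \<Longrightarrow> i k \<le> i s"
    using mi by (metis atLeastAtMost_iff le_eq_less_or_eq)
  have j1_le: "\<And>k. k \<in> {1..s} \<Longrightarrow> j 1 \<le> j k"
    using mj by (metis atLeastAtMost_iff le_eq_less_or_eq)
  have ij: "\<And>k. k \<in> {1..s} \<Longrightarrow> i k \<le> i s \<and> i s \<le> j k"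
    using is_le j1_le c by (meson le_trans)
  define I where "I = map i [1..<Suc s]"
  define J where "J = (if i s < j 1 then map j [1..<Suc s] else map j [2..<Suc s])"
  define x where "x = I @ J"
  have lI: "length I = s" by (simp add: I_def)
  have lJ: "length J = (if i s < j 1 then s else s - 1)" using s by (auto simp: J_def)
  have Inth: "\<And>k. k \<in> {1..s} \<Longrightarrow> x ! (k - 1) = i k"
  proof -
    fix k assume k: "k \<in> {1..s}"
    then have "k - 1 < length I" using lI by auto
    then have "x ! (k - 1) = I ! (k - 1)" by (simp add: x_def nth_append)
    also have "\<dots> = i (1 + (k - 1))" unfolding I_def by (rule map_upt_nth) (use k in auto)
    also have "\<dots> = i k" using k by simp
    finally show "x ! (k - 1) = i k" .
  qed
  have Jnth: "\<And>k. k \<in> {1..s} \<Longrightarrow> x ! (length x - s + k - 1) = j k"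
  proof -
    fix k assume k: "k \<in> {1..s}"
    show "x ! (length x - s + k - 1) = j k"
    proof (cases "i s < j 1")
      case True
      then have "length x - s + k - 1 = s + (k - 1)" using lI lJ k by (simp add: x_def)
      moreover have "x ! (s + (k - 1)) = J ! (k - 1)" using lI by (simp add: x_def nth_append)
      moreover have "J ! (k - 1) = j (1 + (k - 1))" unfolding J_def using True
        by (simp only: if_True) (rule map_upt_nth, use k in auto)
      moreover have "1 + (k - 1) = k" using k by simp
      ultimately show ?thesis by metis
    next
      case False
      then have eq: "i s = j 1" using c by simp
      have lx: "length x = 2 * s - 1" using lI lJ False s by (simp add: x_def)
      show ?thesis
      proof (cases "k = 1")
        case True
        then have "length x - s + k - 1 = s - 1" using lx s by simp
        then show ?thesis using Inth[of s] s eq True by simp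
      next
        case False
        then have k2: "k \<ge> 2" using k by simp
        then have "length x - s + k - 1 = s + (k - 2)" using lx s by simp
        moreover have "x ! (s + (k - 2)) = J ! (k - 2)" using lI by (simp add: x_def nth_append)
        moreover have "J ! (k - 2) = j (2 + (k - 2))" unfolding J_def using \<open>\<not> i s < j 1\<close>
          by (simp only: if_False) (rule map_upt_nth, use k k2 in auto)
        moreover have "2 + (k - 2) = k" using k2 by simp
        ultimately show ?thesis by metis
      qed
    qed
  qed
  have setI: "set I = i ` {1..s}" unfolding I_def
    by (simp del: upt_Suc add: atLeastLessThanSuc_atLeastAtMost)
  have setJ1: "i s < j 1 \<Longrightarrow> set J = j ` {1..s}" unfolding J_def
    by (simp del: upt_Suc add: atLeastLessThanSuc_atLeastAtMost)
  have setJ2: "\<not> i s < j 1 \<Longrightarrow> set J = j ` {2..s}" unfolding J_def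
    by (simp del: upt_Suc add: atLeastLessThanSuc_atLeastAtMost)
  have sI: "sorted_wrt (<) I"
    unfolding I_def sorted_wrt_map
    by (rule sorted_wrt_mono_rel[OF _ sorted_wrt_upt]) (use mi in auto)
  have sJ: "sorted_wrt (<) J"
    unfolding J_def by (auto simp del: upt_Suc intro!: sorted_map_upt mj)
  have cross: "\<forall>a\<in>set I. \<forall>b\<in>set J. a < b"
  proof (intro ballI)
    fix a b assume a: "a \<in> set I" and bb: "b \<in> set J"
    from a obtain k where k: "k \<in> {1..s}" "a = i k" unfolding setI by auto
    have "a \<le> i s" using is_le k by simp
    moreover have "i s < b"
    proof (cases "i s < j 1")
      case True
      then obtain k' where "k' \<in> {1..s}" "b = j k'" using bb setJ1 by auto
      then show ?thesis using True j1_le by (metis order_less_le_trans)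
    next
      case False
      then obtain k' where k': "k' \<in> {2..s}" "b = j k'" using bb setJ2 by auto
      then have "j 1 < j k'" using mj by auto
      then show ?thesis using c k' by simp
    qed
    ultimately show "a < b" by simp
  qed
  have sx: "sorted_wrt (<) x" using sI sJ cross by (simp add: x_def sorted_wrt_append)
  have setx0: "set x \<subseteq> i ` {1..s} \<union> j ` {1..s}"
    using setI setJ1 setJ2 unfolding x_def set_append by (cases "i s < j 1") auto
  have setx1: "i ` {1..s} \<union> j ` {1..s} \<subseteq> {1..n}"
  proof -
    have "\<And>k. k \<in> {1..s} \<Longrightarrow> i k \<in> {1..n} \<and> j k \<in> {1..n}"
    proof -
      fix k assume k: "k \<in> {1..s}"
      have "1 \<le> i k" "j k \<le> n" "i k \<le> i s" "i s \<le> j k" "1 \<le> i s"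
        using b ij[OF k] k s by auto
      then show "i k \<in> {1..n} \<and> j k \<in> {1..n}" by auto
    qed
    then show ?thesis by blast
  qed
  have setx: "set x \<subseteq> {1..n}" using setx0 setx1 by blast
  have lx: "length x = 2 * s \<or> length x = 2 * s - 1" using lI lJ s by (auto simp add: x_def)
  have xL: "x \<in> Ls n s" using sx setx lx by (auto simp: Ls_def Lst_def)
  have "{alpha (i k) (j k) | k. k \<in> {1..s}} = (\<lambda>k. alpha (i k) (j k)) ` {1..s}" by blast
  also have "\<dots> = (\<lambda>k. alpha (x ! (k - 1)) (x ! (length x - s + k - 1))) ` {1..s}"
    using Inth Jnth by (auto intro!: image_cong)
  also have "\<dots> = Ant s x" unfolding Ant_def by blast
  finally show ?thesis using xL by blast
qed


definition Ends :: "(nat \<Rightarrow> int) set \<Rightarrow> nat set" where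
  "Ends S = {p. \<exists>q. p \<le> q \<and> alpha p q \<in> S} \<union> {q. \<exists>p. p \<le> q \<and> alpha p q \<in> S}"

lemma Ends_Ant:
  assumes s: "s \<ge> 1" and x: "x \<in> Ls n s"
  shows "Ends (Ant s x) = set x"
proof -
  let ?m = "length x"
  have sx: "sorted_wrt (<) x" and m: "?m = 2*s \<or> ?m = 2*s - 1"
    using x by (auto simp: Ls_def Lst_def)
  have le: "\<And>a b. a \<le> b \<Longrightarrow> b < ?m \<Longrightarrow> x ! a \<le> x ! b"
    using sorted_wrt_nth_less[OF sx] by (metis le_eq_less_or_eq order_less_imp_le)
  have pair: "\<And>k. k \<in> {1..s} \<Longrightarrow> k - 1 < ?m \<and> ?m - s + k - 1 < ?m \<and> k - 1 \<le> ?m - s + k - 1"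
    using m s by auto
  show ?thesis
  proof
    show "Ends (Ant s x) \<subseteq> set x"
    proof
      fix y assume "y \<in> Ends (Ant s x)"
      then obtain p q where pq: "p \<le> q" "alpha p q \<in> Ant s x" "y = p \<or> y = q"
        unfolding Ends_def by blast
      then obtain k where k: "k \<in> {1..s}" "alpha p q = alpha (x ! (k - 1)) (x ! (?m - s + k - 1))"
        unfolding Ant_def by blast
      have "x ! (k - 1) \<le> x ! (?m - s + k - 1)" using le pair[OF k(1)] by blast
      then have "p = x ! (k - 1) \<and> q = x ! (?m - s + k - 1)" using alpha_inj pq(1) k(2) by blast
      then show "y \<in> set x" using pq(3) pair[OF k(1)] by auto
    qed
  next
    show "set x \<subseteq> Ends (Ant s x)"
    proof
      fix y assume "y \<in> set x"
      then obtain t where t: "t < ?m" "y = x ! t" by (metis in_set_conv_nth)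
      show "y \<in> Ends (Ant s x)"
      proof (cases "t < s")
        case True
        define k where "k = Suc t"
        have k: "k \<in> {1..s}" using True by (simp add: k_def)
        have "alpha (x ! (k - 1)) (x ! (?m - s + k - 1)) \<in> Ant s x" using k unfolding Ant_def by blast
        moreover have "x ! (k - 1) \<le> x ! (?m - s + k - 1)" using le pair[OF k] by blast
        moreover have "x ! (k - 1) = y" using t by (simp add: k_def)
        ultimately show ?thesis unfolding Ends_def by blast
      next
        case False
        define k where "k = t + s + 1 - ?m"
        have k: "k \<in> {1..s}" using False t m by (auto simp: k_def)
        have idx: "?m - s + k - 1 = t" using False t m by (auto simp: k_def)
        have "alpha (x ! (k - 1)) (x ! (?m - s + k - 1)) \<in> Ant s x" using k unfolding Ant_def by blast
        moreover have "x ! (k - 1) \<le> x ! (?m - s + k - 1)" using le pair[OF k] by blast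
        ultimately show ?thesis unfolding Ends_def using idx t by auto
      qed
    qed
  qed
qed

lemma inj_Ant:
  assumes s: "s \<ge> 1"
  shows "inj_on (Ant s) (Ls n s)"
proof (rule inj_onI)
  fix x y assume x: "x \<in> Ls n s" and y: "y \<in> Ls n s" and e: "Ant s x = Ant s y"
  have "set x = set y" using Ends_Ant[OF s x] Ends_Ant[OF s y] e by simp
  moreover have "sorted_wrt (<) x" "sorted_wrt (<) y" using x y by (auto simp: Ls_def Lst_def)
  ultimately show "x = y" using strict_sorted_equal by blast
qed

lemma card_Ls:
  assumes s: "s \<ge> 1"
  shows "card (Ls n s) = (n choose (2*s)) + (n choose (2*s - 1))"
proof -
  have "Lst n (2*s) \<inter> Lst n (2*s - 1) = {}" using s by (auto simp: Lst_def)
  then show ?thesis unfolding Ls_def using card_Lst[of n "2*s"] card_Lst[of n "2*s - 1"]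
    by (simp add: card_Un_disjoint)
qed


lemma AA_eq:
  assumes s: "s \<ge> 1"
  shows "abelian_antichains n s = Tset n s" and "Tset n s = Ant s ` Ls n s"
proof -
  show "abelian_antichains n s = Tset n s"
  proof
    show "abelian_antichains n s \<subseteq> Tset n s"
      using AA_sub_T[OF s] unfolding Tset_def by blast
    show "Tset n s \<subseteq> abelian_antichains n s"
      using T_sub_AA[OF s] unfolding Tset_def by blast
  qed
  show "Tset n s = Ant s ` Ls n s"
  proof
    show "Tset n s \<subseteq> Ant s ` Ls n s"
      using T_in_Ant[OF s] unfolding Tset_def by blast
    show "Ant s ` Ls n s \<subseteq> Tset n s"
      using Ant_in_T[OF s] by blast
  qed
qed

lemma card_AA:
  assumes s: "s \<ge> 1"
  shows "card (abelian_antichains n s) = (n choose (2*s)) + (n choose (2*s - 1))"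
  using AA_eq[OF s] card_image[OF inj_Ant[OF s]] card_Ls[OF s] by simp

lemma AA0: "abelian_antichains n 0 = {{}}"
proof
  show "abelian_antichains n 0 \<subseteq> {{}}"
  proof
    fix A assume "A \<in> abelian_antichains n 0"
    then have "A \<subseteq> posroots n" "card A = 0"
      by (auto simp: abelian_antichains_def antichain_def)
    then have "A = {}" using finite_posroots finite_subset by fastforce
    then show "A \<in> {{}}" by simp
  qed
  show "{{}} \<subseteq> abelian_antichains n 0"
    by (auto simp: abelian_antichains_def antichain_def abelian_def Phi_def)
qed

lemma sum_choose_aux:
  "(\<Sum>s\<le>m. (if s = 0 then 1 else (n choose (2*s)) + (n choose (2*s - 1)))) = (\<Sum>k\<le>2*m. n choose k)"
proof (induction m)
  case 0 then show ?case by simp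
next
  case (Suc m)
  have "(\<Sum>k\<le>2*Suc m. n choose k) = (\<Sum>k\<le>2*m. n choose k) + (n choose (2*m+1)) + (n choose (2*m+2))"
    by (simp add: numeral_2_eq_2)
  then show ?case using Suc by simp
qed

lemma sum_choose_full:
  assumes "n \<le> M"
  shows "(\<Sum>k\<le>M. n choose k) = 2 ^ n"
proof -
  have "(\<Sum>k\<le>M. n choose k) = (\<Sum>k\<le>n. n choose k)"
    by (rule sum.mono_neutral_right) (use assms in auto)
  then show ?thesis by (simp add: choose_row_sum)
qed

theorem mainTheorem6:
  fixes n :: nat
  assumes "n \<ge> 1"
  shows "(\<forall>s\<ge>1.
            abelian_antichains n s =
              {{alpha (i k) (j k) | k. k \<in> {1..s}} | i j.
                 (\<forall>k\<in>{1..s}. 1 \<le> i k \<and> j k \<le> n) \<and>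
                 (\<forall>k\<in>{1..<s}. i k < i (Suc k) \<and> j k < j (Suc k)) \<and>
                 i s \<le> j 1}
          \<and> card (abelian_antichains n s) = (n choose (2*s)) + (n choose (2*s - 1)))
       \<and> (\<forall>m\<ge>n. (\<Sum>s\<le>m. card (abelian_antichains n s)) = 2 ^ n)"
proof (intro conjI allI impI)
  fix s :: nat assume s: "s \<ge> 1"
  show "abelian_antichains n s =
              {{alpha (i k) (j k) | k. k \<in> {1..s}} | i j.
                 (\<forall>k\<in>{1..s}. 1 \<le> i k \<and> j k \<le> n) \<and>
                 (\<forall>k\<in>{1..<s}. i k < i (Suc k) \<and> j k < j (Suc k)) \<and>
                 i s \<le> j 1}"
    using AA_eq(1)[OF s] unfolding Tset_def .
  show "card (abelian_antichains n s) = (n choose (2*s)) + (n choose (2*s - 1))"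
    by (rule card_AA[OF s])
next
  fix m :: nat assume m: "n \<le> m"
  have "(\<Sum>s\<le>m. card (abelian_antichains n s)) =
        (\<Sum>s\<le>m. (if s = 0 then 1 else (n choose (2*s)) + (n choose (2*s - 1))))"
    by (rule sum.cong) (auto simp: AA0 card_AA)
  also have "\<dots> = (\<Sum>k\<le>2*m. n choose k)" by (rule sum_choose_aux)
  also have "\<dots> = 2 ^ n" using m by (intro sum_choose_full) simp
  finally show "(\<Sum>s\<le>m. card (abelian_antichains n s)) = 2 ^ n" .
qed

end
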